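(* Let $E=E^\top\in\mathbb{R}^{n\times n}$ be positive definite, let $\alpha>0$, let $c_1,c_2\in\mathbb{R}^n$, and let $\mathcal{E}_\alpha=\{x\in\mathbb{R}^n : x^\top E x\leq\alpha^2\}$. Define $\phi(x)=x^\top Q x$ with $Q=\tfrac12(c_1c_2^\top+c_2c_1^\top)$. Let $W$ be either $(c_1^\top E^{-1}c_1)\,c_2c_2^\top$ or $(c_2^\top E^{-1}c_2)\,c_1c_1^\top$. Then $$\begin{bmatrix} x\\ \phi(x)\end{bmatrix}^\top\begin{bmatrix}\alpha^2 W & 0\\ 0 & -1\end{bmatrix}\begin{bmatrix} x\\ \phi(x)\end{bmatrix}\geq 0\quad\text{for all } x\in\mathcal{E}_\alpha,$$ i.e. $\phi(x)^2\leq \alpha^2 x^\top W x$ for all $x\in\mathcal{E}_\alpha$. *)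

theory Defs
  imports "HOL-Analysis.Analysis"
begin

definition outer :: "real^'n \<Rightarrow> real^'n \<Rightarrow> real^'n^'n" where
  "outer u v = (\<chi> i j. u $ i * v $ j)"

definition qform :: "real^'n^'n \<Rightarrow> real^'n \<Rightarrow> real" where
  "qform A x = x \<bullet> (A *v x)"

definition pos_def :: "real^'n^'n \<Rightarrow> bool" where
  "pos_def E \<longleftrightarrow> transpose E = E \<and> (\<forall>x. x \<noteq> 0 \<longrightarrow> qform E x > 0)"

end

theory Submission
  imports Defs
begin

lemma qform_sum: "qform A x = (\<Sum>i\<in>UNIV. \<Sum>j\<in>UNIV. x$i * (A$i$j * x$j))"
  unfolding qform_def inner_vec_def matrix_vector_mult_def
  by (simp add: sum_distrib_left)

lemma qform_outer: "qform (outer u v) x = (u \<bullet> x) * (v \<bullet> x)"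
  unfolding qform_sum outer_def inner_vec_def
  by (simp add: sum_product algebra_simps)

lemma qform_scale: "qform (a *\<^sub>R A) x = a * qform A x"
  unfolding qform_sum by (simp add: sum_distrib_left algebra_simps)

lemma qform_add: "qform (A + B) x = qform A x + qform B x"
  unfolding qform_sum by (simp add: sum.distrib algebra_simps)

lemma key:
  fixes E :: "real^'n^'n" and c x :: "real^'n"
  assumes pd: "pos_def E"
  shows "(c \<bullet> x)^2 \<le> qform (matrix_inv E) c * qform E x \<and> qform (matrix_inv E) c \<ge> 0"
proof -
  have sym: "transpose E = E" and pos: "\<And>x. x \<noteq> 0 \<Longrightarrow> qform E x > 0"
    using pd unfolding pos_def_def by auto
  have psd: "qform E z \<ge> 0" for z
    using pos[of z] by (cases "z = 0") (auto simp: qform_def)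
  have ker: "\<forall>z. E *v z = 0 \<longrightarrow> z = 0"
    using pos unfolding qform_def by fastforce
  then have "invertible E"
    using matrix_left_invertible_ker invertible_left_inverse by blast
  then have EI: "E ** matrix_inv E = mat 1"
    unfolding invertible_def matrix_inv_def by (rule someI2_ex) auto
  define y where "y = matrix_inv E *v c"
  have Ey: "E *v y = c" unfolding y_def
    by (simp add: matrix_vector_mul_assoc EI)
  have symB: "u \<bullet> (E *v v) = v \<bullet> (E *v u)" for u v
  proof -
    have "u \<bullet> (E *v v) = (u v* E) \<bullet> v" by (simp add: dot_lmul_matrix)
    also have "u v* E = E *v u"
      by (metis sym vector_transpose_matrix)
    finally show ?thesis by (simp add: inner_commute)
  qed
  have cx: "c \<bullet> x = x \<bullet> (E *v y)" using Ey by (simp add: inner_commute)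
  have cy: "qform (matrix_inv E) c = y \<bullet> (E *v y)"
    unfolding qform_def y_def[symmetric] using Ey by (simp add: inner_commute)
  define a where "a = x \<bullet> (E *v x)"
  define b where "b = x \<bullet> (E *v y)"
  define d where "d = y \<bullet> (E *v y)"
  have byx: "y \<bullet> (E *v x) = b" unfolding b_def using symB by simp
  have quad: "a - 2 * t * b + t^2 * d \<ge> 0" for t
  proof -
    have "0 \<le> qform E (x - t *\<^sub>R y)" by (rule psd)
    also have "\<dots> = a - 2 * t * b + t^2 * d"
      unfolding qform_def a_def d_def
      using byx[unfolded b_def]
      by (simp add: matrix_vector_mult_diff_distrib inner_diff_left inner_diff_right
          b_def power2_eq_square algebra_simps)
    finally show ?thesis .
  qed
  have d0: "d \<ge> 0" unfolding d_def using psd[of y] by (simp add: qform_def)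
  have "b^2 \<le> d * a"
  proof (cases "d = 0")
    case True
    have "b = 0"
    proof (rule ccontr)
      assume "b \<noteq> 0"
      have "a - 2 * (a / (2*b) + 1/(2*b)) * b \<ge> 0" using quad[of "a/(2*b) + 1/(2*b)"] True by simp
      with \<open>b \<noteq> 0\<close> show False by (simp add: field_simps)
    qed
    then show ?thesis using True by simp
  next
    case False
    then have dp: "d > 0" using d0 by simp
    have "a - 2 * (b/d) * b + (b/d)^2 * d \<ge> 0" by (rule quad)
    then have "a - b^2/d \<ge> 0" using dp by (simp add: power2_eq_square field_simps)
    then show ?thesis using dp by (simp add: field_simps)
  qed
  then show ?thesis
    using cx cy d0 unfolding a_def b_def d_def qform_def by (simp add: mult.commute)
qed

theorem lemma4:
  fixes E W :: "real^'n^'n" and \<alpha> :: real and c1 c2 :: "real^'n"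
  assumes "pos_def E"
    and "\<alpha> > 0"
    and "W = qform (matrix_inv E) c1 *\<^sub>R outer c2 c2
         \<or> W = qform (matrix_inv E) c2 *\<^sub>R outer c1 c1"
  shows "\<forall>x \<in> {x. qform E x \<le> \<alpha>^2}.
           (qform ((1/2) *\<^sub>R (outer c1 c2 + outer c2 c1)) x)^2
             \<le> \<alpha>^2 * qform W x"
proof
  fix x assume "x \<in> {x. qform E x \<le> \<alpha>^2}"
  then have xE: "qform E x \<le> \<alpha>^2" by simp
  have phi: "qform ((1/2) *\<^sub>R (outer c1 c2 + outer c2 c1)) x = (c1 \<bullet> x) * (c2 \<bullet> x)"
    by (simp add: qform_scale qform_add qform_outer)
  have gen: "((c \<bullet> x) * (e \<bullet> x))^2 \<le> \<alpha>^2 * (qform (matrix_inv E) c * ((e \<bullet> x) * (e \<bullet> x)))"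
    for c e
  proof -
    have k: "(c \<bullet> x)^2 \<le> qform (matrix_inv E) c * qform E x" using key[OF assms(1)] by blast
    have q0: "qform (matrix_inv E) c \<ge> 0" using key[OF assms(1)] by blast
    have "qform (matrix_inv E) c * qform E x \<le> qform (matrix_inv E) c * \<alpha>^2"
      using q0 xE by (rule mult_left_mono[rotated])
    then have "(c \<bullet> x)^2 \<le> \<alpha>^2 * qform (matrix_inv E) c" using k by (simp add: mult.commute)
    then have "(c \<bullet> x)^2 * (e \<bullet> x)^2 \<le> \<alpha>^2 * qform (matrix_inv E) c * (e \<bullet> x)^2"
      by (rule mult_right_mono) simp
    then show ?thesis by (simp only: power2_eq_square mult.assoc mult.left_commute)
  qed
  show "(qform ((1/2) *\<^sub>R (outer c1 c2 + outer c2 c1)) x)^2 \<le> \<alpha>^2 * qform W x"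
    using assms(3)
  proof
    assume W: "W = qform (matrix_inv E) c1 *\<^sub>R outer c2 c2"
    show ?thesis unfolding phi unfolding W qform_scale qform_outer using gen[of c1 c2] .
  next
    assume W: "W = qform (matrix_inv E) c2 *\<^sub>R outer c1 c1"
    show ?thesis unfolding phi unfolding W qform_scale qform_outer using gen[of c2 c1] by (simp add: mult.commute)
  qed
qed

end
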